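(* Let $\Gamma=\mathrm{Cay}(G,S)$ be a connected bipartite Cayley graph on a finite group $G$, and let $H$ be the part of this bipartite graph containing the identity $e$ (a normal subgroup of index $2$ in $G$, with $S\subseteq G\setminus H$). Let $G'=H\rtimes\langle c\rangle$ be some semidirect product of $H$ with a group $\langle c\rangle$ of order $2$ (so $c\notin H$, $c^2=e$). Fix $a\in G\setminus H$, let $T_a=Sa^{-1}\subseteq H$ and $S'=T_ac\subseteq G'$. If $S'=S'^{-1}$ in $G'$, then the Cayley graph $\mathrm{Cay}(G',S')$ is isomorphic to $\mathrm{Cay}(G,S)$.
   Context: For a finite group $G$ with identity $e$ and a subset $S\subseteq G\setminus\{e\}$ with $S=S^{-1}$, the Cayley graph $\mathrm{Cay}(G,S)$ has vertex set $G$, two vertices $a,b$ being adjacent iff $ab^{-1}\in S$. *)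

theory Defs
  imports "HOL-Algebra.Algebra"
begin

definition cay_adj :: "('a, 'm) monoid_scheme \<Rightarrow> 'a set \<Rightarrow> 'a \<Rightarrow> 'a \<Rightarrow> bool" where
  "cay_adj G S a b \<longleftrightarrow> a \<in> carrier G \<and> b \<in> carrier G \<and> a \<otimes>\<^bsub>G\<^esub> inv\<^bsub>G\<^esub> b \<in> S"

definition cayley_set :: "('a, 'm) monoid_scheme \<Rightarrow> 'a set \<Rightarrow> bool" where
  "cayley_set G S \<longleftrightarrow> S \<subseteq> carrier G - {\<one>\<^bsub>G\<^esub>} \<and> (\<lambda>s. inv\<^bsub>G\<^esub> s) ` S = S"

definition cay_connected :: "('a, 'm) monoid_scheme \<Rightarrow> 'a set \<Rightarrow> bool" where
  "cay_connected G S \<longleftrightarrow> (\<forall>x\<in>carrier G. \<forall>y\<in>carrier G. rtranclp (cay_adj G S) x y)"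

definition cay_bipartition_part :: "('a, 'm) monoid_scheme \<Rightarrow> 'a set \<Rightarrow> 'a set \<Rightarrow> bool" where
  "cay_bipartition_part G S P \<longleftrightarrow> P \<subseteq> carrier G \<and>
     (\<forall>x y. cay_adj G S x y \<longrightarrow> (x \<in> P \<longleftrightarrow> y \<notin> P))"

definition cay_iso :: "('a, 'm) monoid_scheme \<Rightarrow> 'a set \<Rightarrow> ('b, 'n) monoid_scheme \<Rightarrow> 'b set \<Rightarrow> bool" where
  "cay_iso G S G' S' \<longleftrightarrow> (\<exists>f. bij_betw f (carrier G) (carrier G') \<and>
     (\<forall>x\<in>carrier G. \<forall>y\<in>carrier G. cay_adj G S x y \<longleftrightarrow> cay_adj G' S' (f x) (f y)))"

end

theory Submission
  imports Defs
begin

lemma part1: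
  fixes G :: "('a, 'm) monoid_scheme"
  assumes grp: "group G"
    and cS: "cayley_set G S"
    and conn: "cay_connected G S"
    and bip: "cay_bipartition_part G S H" and eH: "\<one>\<^bsub>G\<^esub> \<in> H"
  shows "\<And>x y. x \<in> carrier G \<Longrightarrow> y \<in> carrier G \<Longrightarrow> (x \<otimes>\<^bsub>G\<^esub> y \<in> H \<longleftrightarrow> (x \<in> H \<longleftrightarrow> y \<in> H))"
proof -
  interpret G: group G by (rule grp)
  have SG: "S \<subseteq> carrier G" using cS unfolding cayley_set_def by blast
  have key: "s \<otimes>\<^bsub>G\<^esub> x \<in> H \<longleftrightarrow> x \<notin> H" if s: "s \<in> S" and x: "x \<in> carrier G" for s x
  proof -
    have sG: "s \<in> carrier G" using s SG by blast
    have "cay_adj G S (s \<otimes>\<^bsub>G\<^esub> x) x"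
      unfolding cay_adj_def using sG x s by (simp add: G.m_assoc)
    then show ?thesis using bip unfolding cay_bipartition_part_def by blast
  qed
  fix x y assume x: "x \<in> carrier G" and y: "y \<in> carrier G"
  have "(cay_adj G S)\<^sup>*\<^sup>* x \<one>\<^bsub>G\<^esub>" using conn x unfolding cay_connected_def by blast
  then have "\<forall>y\<in>carrier G. (x \<otimes>\<^bsub>G\<^esub> y \<in> H \<longleftrightarrow> (x \<in> H \<longleftrightarrow> y \<in> H))"
  proof (induction rule: converse_rtranclp_induct)
    case base
    then show ?case using eH by simp
  next
    case (step u z)
    then have u: "u \<in> carrier G" and z: "z \<in> carrier G" and s: "u \<otimes>\<^bsub>G\<^esub> inv\<^bsub>G\<^esub> z \<in> S"
      unfolding cay_adj_def by auto
    have ue: "u = (u \<otimes>\<^bsub>G\<^esub> inv\<^bsub>G\<^esub> z) \<otimes>\<^bsub>G\<^esub> z" using u z by (simp add: G.m_assoc)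
    show ?case
    proof
      fix y assume y: "y \<in> carrier G"
      have "u \<otimes>\<^bsub>G\<^esub> y = (u \<otimes>\<^bsub>G\<^esub> inv\<^bsub>G\<^esub> z) \<otimes>\<^bsub>G\<^esub> (z \<otimes>\<^bsub>G\<^esub> y)"
        using u z y by (metis G.inv_closed G.l_inv G.l_one G.m_assoc G.m_closed)
      then have "u \<otimes>\<^bsub>G\<^esub> y \<in> H \<longleftrightarrow> z \<otimes>\<^bsub>G\<^esub> y \<notin> H" using key[OF s] z y by simp
      moreover have "u \<in> H \<longleftrightarrow> z \<notin> H" using key[OF s z] ue by simp
      ultimately show "u \<otimes>\<^bsub>G\<^esub> y \<in> H \<longleftrightarrow> (u \<in> H \<longleftrightarrow> y \<in> H)" using step.IH y by blast
    qed
  qed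
  then show "x \<otimes>\<^bsub>G\<^esub> y \<in> H \<longleftrightarrow> (x \<in> H \<longleftrightarrow> y \<in> H)" using y by blast
qed

lemma (in group) cancA: "x \<in> carrier G \<Longrightarrow> y \<in> carrier G \<Longrightarrow> x \<otimes> (inv x \<otimes> y) = y"
  by (simp add: m_assoc[symmetric])
lemma (in group) cancB: "x \<in> carrier G \<Longrightarrow> y \<in> carrier G \<Longrightarrow> inv x \<otimes> (x \<otimes> y) = y"
  by (simp add: m_assoc[symmetric])

theorem lemma3p3:
  fixes G :: "('a, 'm) monoid_scheme" and G' :: "('b, 'n) monoid_scheme"
    and S H :: "'a set" and \<iota> :: "'a \<Rightarrow> 'b" and c :: 'b and a :: 'a
  assumes grp: "group G" and fin: "finite (carrier G)"
    and cS: "cayley_set G S"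
    and conn: "cay_connected G S"
    and bip: "cay_bipartition_part G S H" and eH: "\<one>\<^bsub>G\<^esub> \<in> H"
    and grp': "group G'"
    and hom: "\<iota> \<in> hom (G\<lparr>carrier := H\<rparr>) G'" and inj: "inj_on \<iota> H"
    and nrm: "\<iota> ` H \<lhd> G'"
    and c: "c \<in> carrier G'" "c \<notin> \<iota> ` H" "c \<otimes>\<^bsub>G'\<^esub> c = \<one>\<^bsub>G'\<^esub>"
    and car: "carrier G' = \<iota> ` H \<union> (\<lambda>h. h \<otimes>\<^bsub>G'\<^esub> c) ` \<iota> ` H"
    and a: "a \<in> carrier G - H"
    and symm: "(\<lambda>s. inv\<^bsub>G'\<^esub> s) ` ((\<lambda>t. \<iota> t \<otimes>\<^bsub>G'\<^esub> c) ` ((\<lambda>s. s \<otimes>\<^bsub>G\<^esub> inv\<^bsub>G\<^esub> a) ` S))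
               = (\<lambda>t. \<iota> t \<otimes>\<^bsub>G'\<^esub> c) ` ((\<lambda>s. s \<otimes>\<^bsub>G\<^esub> inv\<^bsub>G\<^esub> a) ` S)"
  shows "cay_iso G' ((\<lambda>t. \<iota> t \<otimes>\<^bsub>G'\<^esub> c) ` ((\<lambda>s. s \<otimes>\<^bsub>G\<^esub> inv\<^bsub>G\<^esub> a) ` S)) G S"
proof -
  interpret G: group G by (rule grp)
  interpret G': group G' by (rule grp')
  define S' where "S' = (\<lambda>t. \<iota> t \<otimes>\<^bsub>G'\<^esub> c) ` ((\<lambda>s. s \<otimes>\<^bsub>G\<^esub> inv\<^bsub>G\<^esub> a) ` S)"
  have par: "\<And>x y. x \<in> carrier G \<Longrightarrow> y \<in> carrier G \<Longrightarrow> (x \<otimes>\<^bsub>G\<^esub> y \<in> H \<longleftrightarrow> (x \<in> H \<longleftrightarrow> y \<in> H))"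
    by (rule part1[OF grp cS conn bip eH])
  have HG: "H \<subseteq> carrier G" using bip unfolding cay_bipartition_part_def by blast
  have SG: "S \<subseteq> carrier G" using cS unfolding cayley_set_def by blast
  have Sinv: "inv\<^bsub>G\<^esub> s \<in> S" if "s \<in> S" for s using cS that unfolding cayley_set_def by blast
  have aG: "a \<in> carrier G" and aH: "a \<notin> H" using a by auto
  have invH: "inv\<^bsub>G\<^esub> x \<in> H \<longleftrightarrow> x \<in> H" if "x \<in> carrier G" for x
    using par[of x "inv\<^bsub>G\<^esub> x"] that eH by simp
  have SH: "s \<notin> H" if "s \<in> S" for s
  proof -
    have "cay_adj G S s \<one>\<^bsub>G\<^esub>" using that SG unfolding cay_adj_def by auto
    then show ?thesis using bip eH unfolding cay_bipartition_part_def by blast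
  qed
  have TH: "s \<otimes>\<^bsub>G\<^esub> inv\<^bsub>G\<^esub> a \<in> H" if "s \<in> S" for s
    using par[of s "inv\<^bsub>G\<^esub> a"] that SG SH aG aH invH by auto
  have conjH: "a \<otimes>\<^bsub>G\<^esub> y \<otimes>\<^bsub>G\<^esub> inv\<^bsub>G\<^esub> a \<in> H" if "y \<in> H" for y
    using par[of "a \<otimes>\<^bsub>G\<^esub> y" "inv\<^bsub>G\<^esub> a"] par[of a y] that HG aG aH invH by auto
  have conjH': "inv\<^bsub>G\<^esub> a \<otimes>\<^bsub>G\<^esub> y \<otimes>\<^bsub>G\<^esub> a \<in> H" if "y \<in> H" for y
    using par[of "inv\<^bsub>G\<^esub> a \<otimes>\<^bsub>G\<^esub> y" a] par[of "inv\<^bsub>G\<^esub> a" y] that HG aG aH invH by auto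
  have Hmul: "x \<otimes>\<^bsub>G\<^esub> y \<in> H" if "x \<in> H" "y \<in> H" for x y
    using par[of x y] that HG by auto
  have iG: "\<iota> h \<in> carrier G'" if "h \<in> H" for h
    using hom that unfolding hom_def by auto
  have imul: "\<iota> (x \<otimes>\<^bsub>G\<^esub> y) = \<iota> x \<otimes>\<^bsub>G'\<^esub> \<iota> y" if "x \<in> H" "y \<in> H" for x y
    using hom_mult[OF hom, of x y] that by simp
  have i1: "\<iota> \<one>\<^bsub>G\<^esub> = \<one>\<^bsub>G'\<^esub>"
    using imul[OF eH eH] iG[OF eH] by simp
  have iinv: "inv\<^bsub>G'\<^esub> (\<iota> h) = \<iota> (inv\<^bsub>G\<^esub> h)" if "h \<in> H" for h
  proof (rule G'.inv_equality)
    show "\<iota> (inv\<^bsub>G\<^esub> h) \<otimes>\<^bsub>G'\<^esub> \<iota> h = \<one>\<^bsub>G'\<^esub>"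
      using imul[of "inv\<^bsub>G\<^esub> h" h] that invH HG i1 by auto
  qed (use that iG invH HG in auto)
  have invc: "inv\<^bsub>G'\<^esub> c = c" using G'.inv_equality[OF c(3) c(1) c(1)] .
  have cconj: "c \<otimes>\<^bsub>G'\<^esub> x \<otimes>\<^bsub>G'\<^esub> c \<in> \<iota> ` H" if "x \<in> \<iota> ` H" for x
    using normal.inv_op_closed2[OF nrm c(1) that] invc by simp
  have notI: "\<iota> h \<otimes>\<^bsub>G'\<^esub> c \<notin> \<iota> ` H" if "h \<in> H" for h
  proof
    assume "\<iota> h \<otimes>\<^bsub>G'\<^esub> c \<in> \<iota> ` H"
    then obtain k where k: "k \<in> H" "\<iota> h \<otimes>\<^bsub>G'\<^esub> c = \<iota> k" by auto
    have "c = inv\<^bsub>G'\<^esub> (\<iota> h) \<otimes>\<^bsub>G'\<^esub> \<iota> k"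
      using k that iG c(1) G'.inv_solve_left by metis
    also have "\<dots> = \<iota> (inv\<^bsub>G\<^esub> h \<otimes>\<^bsub>G\<^esub> k)" using iinv imul that k invH HG by auto
    finally show False using c(2) Hmul invH HG that k by auto
  qed
  define ii where "ii y = inv_into H \<iota> y" for y
  have ii1: "ii (\<iota> h) = h" if "h \<in> H" for h using inj that unfolding ii_def by simp
  have ii2: "ii y \<in> H" "\<iota> (ii y) = y" if "y \<in> \<iota> ` H" for y
    using that unfolding ii_def by (auto simp: inv_into_into f_inv_into_f)
  define phi where "phi h = ii (c \<otimes>\<^bsub>G'\<^esub> \<iota> h \<otimes>\<^bsub>G'\<^esub> c)" for h
  have phiH: "phi h \<in> H" and iphi: "\<iota> (phi h) = c \<otimes>\<^bsub>G'\<^esub> \<iota> h \<otimes>\<^bsub>G'\<^esub> c" if "h \<in> H" for h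
    using ii2[OF cconj] that unfolding phi_def by auto
  define f where "f x = (if x \<in> \<iota> ` H then inv\<^bsub>G\<^esub> a \<otimes>\<^bsub>G\<^esub> ii (c \<otimes>\<^bsub>G'\<^esub> x \<otimes>\<^bsub>G'\<^esub> c) \<otimes>\<^bsub>G\<^esub> a
     else ii (x \<otimes>\<^bsub>G'\<^esub> c) \<otimes>\<^bsub>G\<^esub> a)" for x
  define g where "g y = (if y \<in> H then c \<otimes>\<^bsub>G'\<^esub> \<iota> (a \<otimes>\<^bsub>G\<^esub> y \<otimes>\<^bsub>G\<^esub> inv\<^bsub>G\<^esub> a) \<otimes>\<^bsub>G'\<^esub> c
     else \<iota> (y \<otimes>\<^bsub>G\<^esub> inv\<^bsub>G\<^esub> a) \<otimes>\<^bsub>G'\<^esub> c)" for y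
  have f1: "f (\<iota> h) = inv\<^bsub>G\<^esub> a \<otimes>\<^bsub>G\<^esub> phi h \<otimes>\<^bsub>G\<^esub> a" if "h \<in> H" for h
    using that unfolding f_def phi_def by auto
  have f2: "f (\<iota> k \<otimes>\<^bsub>G'\<^esub> c) = k \<otimes>\<^bsub>G\<^esub> a" if "k \<in> H" for k
    using that notI[OF that] iG[OF that] c ii1 unfolding f_def by (simp add: G'.m_assoc)
  have cc: "c \<otimes>\<^bsub>G'\<^esub> (c \<otimes>\<^bsub>G'\<^esub> y) = y" if "y \<in> carrier G'" for y
    using that c by (simp add: G'.m_assoc[symmetric])
  note simps = G.m_assoc G'.m_assoc G.cancA G.cancB cc G.inv_mult_group G'.inv_mult_group
  have HG': "h \<in> carrier G" if "h \<in> H" for h using that HG by blast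
  have kaH: "k \<otimes>\<^bsub>G\<^esub> a \<notin> H" if "k \<in> H" for k using par[of k a] that HG aG aH by auto
  have cases: "P x" if "x \<in> carrier G'" "\<And>h. h \<in> H \<Longrightarrow> x = \<iota> h \<Longrightarrow> P x"
     "\<And>k. k \<in> H \<Longrightarrow> x = \<iota> k \<otimes>\<^bsub>G'\<^esub> c \<Longrightarrow> P x" for x P
    using that car by auto
  have bij: "bij_betw f (carrier G') (carrier G)"
  proof (rule bij_betw_byWitness[where f'=g])
    show "\<forall>x\<in>carrier G'. g (f x) = x"
    proof
      fix x assume x: "x \<in> carrier G'"
      show "g (f x) = x"
      proof (rule cases[OF x])
        fix h assume h: "h \<in> H" "x = \<iota> h"
        have "g (f x) = c \<otimes>\<^bsub>G'\<^esub> \<iota> (phi h) \<otimes>\<^bsub>G'\<^esub> c"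
          using h f1 conjH' phiH unfolding g_def by (simp add: simps HG' aG)
        also have "\<dots> = x" using iphi h iG c by (simp add: simps)
        finally show ?thesis .
      next
        fix k assume k: "k \<in> H" "x = \<iota> k \<otimes>\<^bsub>G'\<^esub> c"
        show ?thesis using k f2 kaH unfolding g_def by (simp add: simps HG' aG)
      qed
    qed
    show "\<forall>y\<in>carrier G. f (g y) = y"
    proof
      fix y assume y: "y \<in> carrier G"
      show "f (g y) = y"
      proof (cases "y \<in> H")
        case True
        have q: "a \<otimes>\<^bsub>G\<^esub> y \<otimes>\<^bsub>G\<^esub> inv\<^bsub>G\<^esub> a \<in> H" using conjH True .
        have gy: "g y \<in> \<iota> ` H" using True cconj[of "\<iota> (a \<otimes>\<^bsub>G\<^esub> y \<otimes>\<^bsub>G\<^esub> inv\<^bsub>G\<^esub> a)"] q unfolding g_def by auto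
        have "c \<otimes>\<^bsub>G'\<^esub> g y \<otimes>\<^bsub>G'\<^esub> c = \<iota> (a \<otimes>\<^bsub>G\<^esub> y \<otimes>\<^bsub>G\<^esub> inv\<^bsub>G\<^esub> a)"
          using True q iG[OF q] c unfolding g_def by (simp add: simps)
        then show ?thesis using gy ii1[OF q] True y aG unfolding f_def by (simp add: simps)
      next
        case False
        have q: "y \<otimes>\<^bsub>G\<^esub> inv\<^bsub>G\<^esub> a \<in> H" using par[of y "inv\<^bsub>G\<^esub> a"] y aG aH invH False by auto
        show ?thesis using False f2[OF q] y aG unfolding g_def by (simp add: simps)
      qed
    qed
    show "f ` carrier G' \<subseteq> carrier G"
    proof
      fix z assume "z \<in> f ` carrier G'"
      then obtain x where x: "x \<in> carrier G'" "z = f x" by auto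
      show "z \<in> carrier G"
        by (rule cases[OF x(1)]) (use x f1 f2 conjH' phiH HG' aG in auto)
    qed
    show "g ` carrier G \<subseteq> carrier G'"
    proof
      fix z assume "z \<in> g ` carrier G"
      then obtain y where y: "y \<in> carrier G" "z = g y" by auto
      show "z \<in> carrier G'"
      proof (cases "y \<in> H")
        case True then show ?thesis using y conjH iG c unfolding g_def by auto
      next
        case False
        have q: "y \<otimes>\<^bsub>G\<^esub> inv\<^bsub>G\<^esub> a \<in> H" using par[of y "inv\<^bsub>G\<^esub> a"] y aG aH invH False by auto
        then show ?thesis using y False iG c unfolding g_def by auto
      qed
    qed
  qed
  have S'inv: "inv\<^bsub>G'\<^esub> t \<in> S'" if "t \<in> S'" for t using symm that unfolding S'_def by blast
  have S'G: "S' \<subseteq> carrier G'" using TH iG c unfolding S'_def by auto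
  have adjG_sym: "cay_adj G S v u" if "cay_adj G S u v" for u v
  proof -
    have u: "u \<in> carrier G" "v \<in> carrier G" "u \<otimes>\<^bsub>G\<^esub> inv\<^bsub>G\<^esub> v \<in> S" using that unfolding cay_adj_def by auto
    have "inv\<^bsub>G\<^esub> (u \<otimes>\<^bsub>G\<^esub> inv\<^bsub>G\<^esub> v) = v \<otimes>\<^bsub>G\<^esub> inv\<^bsub>G\<^esub> u" using u by (simp add: simps)
    then show ?thesis using Sinv[OF u(3)] u unfolding cay_adj_def by simp
  qed
  have adjG'_sym: "cay_adj G' S' v u" if "cay_adj G' S' u v" for u v
  proof -
    have u: "u \<in> carrier G'" "v \<in> carrier G'" "u \<otimes>\<^bsub>G'\<^esub> inv\<^bsub>G'\<^esub> v \<in> S'" using that unfolding cay_adj_def by auto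
    have "inv\<^bsub>G'\<^esub> (u \<otimes>\<^bsub>G'\<^esub> inv\<^bsub>G'\<^esub> v) = v \<otimes>\<^bsub>G'\<^esub> inv\<^bsub>G'\<^esub> u" using u by (simp add: simps)
    then show ?thesis using S'inv[OF u(3)] u unfolding cay_adj_def by simp
  qed
  have bipG: "u \<in> H \<longleftrightarrow> v \<notin> H" if "cay_adj G S u v" for u v
    using bip that unfolding cay_bipartition_part_def by blast
  have S'notH: "\<iota> p \<notin> S'" if "p \<in> H" for p
  proof
    assume "\<iota> p \<in> S'"
    then obtain s where "s \<in> S" "\<iota> p = \<iota> (s \<otimes>\<^bsub>G\<^esub> inv\<^bsub>G\<^esub> a) \<otimes>\<^bsub>G'\<^esub> c" unfolding S'_def by auto
    then show False using notI[OF TH] that by (metis image_eqI)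
  qed
  have S'mem: "\<iota> p \<otimes>\<^bsub>G'\<^esub> c \<in> S' \<longleftrightarrow> p \<otimes>\<^bsub>G\<^esub> a \<in> S" if p: "p \<in> H" for p
  proof
    assume "\<iota> p \<otimes>\<^bsub>G'\<^esub> c \<in> S'"
    then obtain s where s: "s \<in> S" "\<iota> p \<otimes>\<^bsub>G'\<^esub> c = \<iota> (s \<otimes>\<^bsub>G\<^esub> inv\<^bsub>G\<^esub> a) \<otimes>\<^bsub>G'\<^esub> c" unfolding S'_def by auto
    then have "\<iota> p = \<iota> (s \<otimes>\<^bsub>G\<^esub> inv\<^bsub>G\<^esub> a)" using p TH iG c(1) by simp
    then have "p = s \<otimes>\<^bsub>G\<^esub> inv\<^bsub>G\<^esub> a" using inj p TH[OF s(1)] by (simp add: inj_on_eq_iff)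
    then show "p \<otimes>\<^bsub>G\<^esub> a \<in> S" using s(1) SG aG by (auto simp: simps)
  next
    assume pa: "p \<otimes>\<^bsub>G\<^esub> a \<in> S"
    have "p = (p \<otimes>\<^bsub>G\<^esub> a) \<otimes>\<^bsub>G\<^esub> inv\<^bsub>G\<^esub> a" using p HG' aG by (simp add: simps)
    then show "\<iota> p \<otimes>\<^bsub>G'\<^esub> c \<in> S'" using pa unfolding S'_def by (metis image_eqI)
  qed
  have mainA: "cay_adj G' S' (\<iota> k \<otimes>\<^bsub>G'\<^esub> c) (\<iota> h) \<longleftrightarrow> cay_adj G S (k \<otimes>\<^bsub>G\<^esub> a) (inv\<^bsub>G\<^esub> a \<otimes>\<^bsub>G\<^esub> phi h \<otimes>\<^bsub>G\<^esub> a)"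
    if k: "k \<in> H" and h: "h \<in> H" for h k
  proof -
    define p where "p = k \<otimes>\<^bsub>G\<^esub> inv\<^bsub>G\<^esub> (phi h)"
    have pH: "p \<in> H" unfolding p_def using Hmul k phiH[OF h] invH HG' by auto
    have "\<iota> p = \<iota> k \<otimes>\<^bsub>G'\<^esub> inv\<^bsub>G'\<^esub> (\<iota> (phi h))"
      unfolding p_def using imul k phiH[OF h] invH HG' iinv by auto
    also have "\<dots> = \<iota> k \<otimes>\<^bsub>G'\<^esub> (c \<otimes>\<^bsub>G'\<^esub> inv\<^bsub>G'\<^esub> (\<iota> h) \<otimes>\<^bsub>G'\<^esub> c)"
      using iphi[OF h] iG[OF h] c(1) invc by (simp add: simps)
    finally have e1: "(\<iota> k \<otimes>\<^bsub>G'\<^esub> c) \<otimes>\<^bsub>G'\<^esub> inv\<^bsub>G'\<^esub> (\<iota> h) = \<iota> p \<otimes>\<^bsub>G'\<^esub> c"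
      using iG[OF h] iG[OF k] c by (simp add: simps)
    have e2: "(k \<otimes>\<^bsub>G\<^esub> a) \<otimes>\<^bsub>G\<^esub> inv\<^bsub>G\<^esub> (inv\<^bsub>G\<^esub> a \<otimes>\<^bsub>G\<^esub> phi h \<otimes>\<^bsub>G\<^esub> a) = p \<otimes>\<^bsub>G\<^esub> a"
      unfolding p_def using HG' k phiH[OF h] aG by (simp add: simps)
    show ?thesis unfolding cay_adj_def
      using e1 e2 S'mem[OF pH] iG[OF h] iG[OF k] c(1) HG' k phiH[OF h] aG conjH'
      by auto
  qed
  have adj: "cay_adj G' S' x y \<longleftrightarrow> cay_adj G S (f x) (f y)" if x: "x \<in> carrier G'" and y: "y \<in> carrier G'" for x y
  proof (rule cases[OF x]; rule cases[OF y])
    fix h h' assume h: "h \<in> H" "x = \<iota> h" and h': "h' \<in> H" "y = \<iota> h'"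
    have "\<not> cay_adj G' S' x y"
      using h h' S'notH[of "h \<otimes>\<^bsub>G\<^esub> inv\<^bsub>G\<^esub> h'"] Hmul invH HG' imul iinv unfolding cay_adj_def by auto
    moreover have "\<not> cay_adj G S (f x) (f y)"
      using bipG h h' f1 conjH' phiH by metis
    ultimately show ?thesis by blast
  next
    fix h k assume h: "h \<in> H" "x = \<iota> h" and k: "k \<in> H" "y = \<iota> k \<otimes>\<^bsub>G'\<^esub> c"
    show ?thesis using mainA[OF k(1) h(1)] adjG_sym adjG'_sym h k f1 f2 by metis
  next
    fix h k assume k: "k \<in> H" "x = \<iota> k \<otimes>\<^bsub>G'\<^esub> c" and h: "h \<in> H" "y = \<iota> h"
    show ?thesis using mainA[OF k(1) h(1)] h k f1 f2 by metis
  next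
    fix k k' assume k: "k \<in> H" "x = \<iota> k \<otimes>\<^bsub>G'\<^esub> c" and k': "k' \<in> H" "y = \<iota> k' \<otimes>\<^bsub>G'\<^esub> c"
    have "x \<otimes>\<^bsub>G'\<^esub> inv\<^bsub>G'\<^esub> y = \<iota> k \<otimes>\<^bsub>G'\<^esub> inv\<^bsub>G'\<^esub> (\<iota> k')"
      using k k' iG c(1) invc by (simp add: simps)
    also have "\<dots> = \<iota> (k \<otimes>\<^bsub>G\<^esub> inv\<^bsub>G\<^esub> k')" using k k' iinv imul invH HG' by auto
    finally have "\<not> cay_adj G' S' x y"
      using S'notH[of "k \<otimes>\<^bsub>G\<^esub> inv\<^bsub>G\<^esub> k'"] Hmul invH HG' k k' unfolding cay_adj_def by auto
    moreover have "\<not> cay_adj G S (f x) (f y)"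
      using bipG k k' f2 kaH by metis
    ultimately show ?thesis by blast
  qed
  show ?thesis unfolding cay_iso_def S'_def[symmetric] using bij adj by blast
qed
end
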